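(* Let $m\ge3$ and let $c_j(a)$, $0\le j\le m+1$, be as defined in the context. Then: (i) each $c_j(a)$ is a polynomial in $a_1,\dots,a_m$; (ii) $c_0(a)$ is independent of $a$; (iii) for $1\le j\le m$, $c_j(a)$ depends only on $a_1,\dots,a_j$ and is a non-constant affine-linear function of $a_j$ (for fixed $a_1,\dots,a_{j-1}$).
   Context: $a=(a_1,\dots,a_m)\in\mathbb C^m$, $P(z)=a_1z^{m-1}+\dots+a_m$, $\binom{1/2}{k}=\frac{\frac12(\frac12-1)\cdots(\frac12-k+1)}{k!}$. For $j\ge1$, $1\le k\le j$, $b_{j,k}(a)$ is the coefficient of $z^{mk-j}$ in $\binom{1/2}{k}P(z)^k$ ($0$ if $mk-j<0$), $b_j(a)=\sum_{k=1}^jb_{j,k}(a)$, $\nu(a)=0$ for $m$ odd and $\nu(a)=b_{\frac m2+1}(a)$ for $m$ even. $g_j(\tau)=\sum_{k=1}^{j}b_{j,k}(a)\tau^{mk-j}(\tau^m+1)^{-(k-\frac12)}$. $K_{m,0}=\int_0^\infty(\sqrt{1+t^m}-t^{m/2})dt$; $K_{m,j}(a)=\int_0^\infty(g_j(t)-b_j(a)t^{\frac m2-j})dt$ for $1\le j\le\frac{m+1}2$; $K_{m,\frac m2+1}(a)=\int_0^\infty(g_{\frac m2+1}(t)-\frac{b_{\frac m2+1}(a)}{t+1})dt$ for $m$ even; $K_{m,j}(a)=\int_0^\infty g_j(t)dt$ for $j\ge\frac{m+3}2$. Then $c_j(a)=\frac1\pi\cos(\frac{(j-1)\pi}m)K_{m,j}(a)$,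 except $c_{\frac m2+1}(a)=-\frac{\nu(a)}m$ when $m$ is even. *)

theory Defs
  imports "HOL-Analysis.Analysis" "HOL-Computational_Algebra.Polynomial"
begin

text \<open>The coefficient vector a = (a_1,...,a_m) is represented as a function
  a :: nat => complex; only the values a 1, ..., a m are used.\<close>

definition Ppoly :: "nat \<Rightarrow> (nat \<Rightarrow> complex) \<Rightarrow> complex poly" where
  "Ppoly m a = (\<Sum>i=1..m. monom (a i) (m - i))"

definition bjk :: "nat \<Rightarrow> (nat \<Rightarrow> complex) \<Rightarrow> nat \<Rightarrow> nat \<Rightarrow> complex" where
  "bjk m a j k = (if m * k < j then 0
      else coeff (smult ((1/2 :: complex) gchoose k) (Ppoly m a ^ k)) (m * k - j))"

definition bj :: "nat \<Rightarrow> (nat \<Rightarrow> complex) \<Rightarrow> nat \<Rightarrow> complex" where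
  "bj m a j = (\<Sum>k=1..j. bjk m a j k)"

definition nu :: "nat \<Rightarrow> (nat \<Rightarrow> complex) \<Rightarrow> complex" where
  "nu m a = (if odd m then 0 else bj m a (m div 2 + 1))"

definition gj :: "nat \<Rightarrow> (nat \<Rightarrow> complex) \<Rightarrow> nat \<Rightarrow> real \<Rightarrow> complex" where
  "gj m a j \<tau> = (\<Sum>k=1..j. bjk m a j k *
      complex_of_real (\<tau> powr (real (m * k) - real j) *
                       (\<tau> ^ m + 1) powr (- (real k - 1/2))))"

definition Kmj :: "nat \<Rightarrow> nat \<Rightarrow> (nat \<Rightarrow> complex) \<Rightarrow> complex" where
  "Kmj m j a =
    (if j = 0 then
       integral {0<..} (\<lambda>t::real. complex_of_real (sqrt (1 + t ^ m) - t powr (real m / 2)))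
     else if 2 * j \<le> m + 1 then
       integral {0<..} (\<lambda>t::real. gj m a j t - bj m a j * complex_of_real (t powr (real m / 2 - real j)))
     else if even m \<and> j = m div 2 + 1 then
       integral {0<..} (\<lambda>t::real. gj m a j t - bj m a j / complex_of_real (t + 1))
     else
       integral {0<..} (\<lambda>t::real. gj m a j t))"

definition cj :: "nat \<Rightarrow> nat \<Rightarrow> (nat \<Rightarrow> complex) \<Rightarrow> complex" where
  "cj m j a =
    (if even m \<and> j = m div 2 + 1 then - nu m a / of_nat m
     else complex_of_real (cos ((real j - 1) * pi / real m) / pi) * Kmj m j a)"

end

theory Submission
  imports Defs
begin


definition mpoly :: "nat \<Rightarrow> ((nat \<Rightarrow> complex) \<Rightarrow> complex) \<Rightarrow> bool" where
 "mpoly m f \<longleftrightarrow> (\<exists>S coef. finite S \<and> (\<forall>a. f a = (\<Sum>\<alpha>\<in>S. coef \<alpha> * (\<Prod>i=1..m. a i ^ \<alpha> i))))"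

lemma mpoly_const: "mpoly m (\<lambda>a. c)"
  unfolding mpoly_def
  by (rule exI[of _ "{\<lambda>_. 0}"], rule exI[of _ "\<lambda>_. c"]) simp

lemma mpoly_var: assumes "1 \<le> i" "i \<le> m" shows "mpoly m (\<lambda>a. a i)"
  unfolding mpoly_def
proof (rule exI[of _ "{\<lambda>l. if l = i then 1 else 0}"], rule exI[of _ "\<lambda>_. 1"], intro conjI allI)
  fix a :: "nat \<Rightarrow> complex"
  have "(\<Prod>l=1..m. a l ^ (if l = i then 1 else 0)) = (\<Prod>l=1..m. if l = i then a l else 1)"
    by (rule prod.cong) auto
  also have "\<dots> = a i" using assms by (subst prod.delta) auto
  finally show "a i = (\<Sum>\<alpha>\<in>{\<lambda>l. if l = i then 1 else 0}. 1 * (\<Prod>l = 1..m. a l ^ \<alpha> l))" by simp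
qed simp

lemma mpoly_add: assumes "mpoly m f" "mpoly m g" shows "mpoly m (\<lambda>a. f a + g a)"
proof -
  from assms obtain S c T d where S: "finite S" "\<And>a. f a = (\<Sum>\<alpha>\<in>S. c \<alpha> * (\<Prod>i=1..m. a i ^ \<alpha> i))"
    and T: "finite T" "\<And>a. g a = (\<Sum>\<alpha>\<in>T. d \<alpha> * (\<Prod>i=1..m. a i ^ \<alpha> i))"
    unfolding mpoly_def by blast
  define e where "e \<alpha> = (if \<alpha> \<in> S then c \<alpha> else 0) + (if \<alpha> \<in> T then d \<alpha> else 0)" for \<alpha>
  have "f a + g a = (\<Sum>\<alpha>\<in>S \<union> T. e \<alpha> * (\<Prod>i=1..m. a i ^ \<alpha> i))" for a
  proof -
    have "(\<Sum>\<alpha>\<in>S \<union> T. e \<alpha> * (\<Prod>i=1..m. a i ^ \<alpha> i)) =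
      (\<Sum>\<alpha>\<in>S \<union> T. (if \<alpha> \<in> S then c \<alpha> * (\<Prod>i=1..m. a i ^ \<alpha> i) else 0)) +
      (\<Sum>\<alpha>\<in>S \<union> T. (if \<alpha> \<in> T then d \<alpha> * (\<Prod>i=1..m. a i ^ \<alpha> i) else 0))"
      unfolding e_def sum.distrib[symmetric] by (intro sum.cong refl) (simp add: distrib_right)
    also have "\<dots> = f a + g a" unfolding S(2) T(2)
      using S(1) T(1) by (simp add: sum.If_cases Int_absorb1 Int_absorb2)
    finally show ?thesis by simp
  qed
  then show ?thesis unfolding mpoly_def using S(1) T(1) by blast
qed

lemma mpoly_mult: assumes "mpoly m f" "mpoly m g" shows "mpoly m (\<lambda>a. f a * g a)"
proof -
  from assms obtain S c T d where S: "finite S" "\<And>a. f a = (\<Sum>\<alpha>\<in>S. c \<alpha> * (\<Prod>i=1..m. a i ^ \<alpha> i))"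
    and T: "finite T" "\<And>a. g a = (\<Sum>\<alpha>\<in>T. d \<alpha> * (\<Prod>i=1..m. a i ^ \<alpha> i))"
    unfolding mpoly_def by blast
  define M where "M \<alpha> a = (\<Prod>i=1..m. (a i::complex) ^ \<alpha> i)" for \<alpha> :: "nat \<Rightarrow> nat" and a
  define pl where "pl p = (\<lambda>i. fst p i + snd p i)" for p :: "(nat\<Rightarrow>nat) \<times> (nat \<Rightarrow> nat)"
  define U where "U = pl ` (S \<times> T)"
  define e where "e \<gamma> = (\<Sum>p\<in>{p\<in>S \<times> T. pl p = \<gamma>}. c (fst p) * d (snd p))" for \<gamma>
  have Mpl: "M (pl p) a = M (fst p) a * M (snd p) a" for p a
    unfolding M_def pl_def by (simp add: power_add prod.distrib)
  have "f a * g a = (\<Sum>\<gamma>\<in>U. e \<gamma> * M \<gamma> a)" for a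
  proof -
    have "f a * g a = (\<Sum>p\<in>S \<times> T. c (fst p) * d (snd p) * M (pl p) a)"
      unfolding S(2) T(2) sum_product sum.cartesian_product
      by (rule sum.cong) (auto simp: M_def pl_def power_add prod.distrib)
    also have "\<dots> = (\<Sum>\<gamma>\<in>U. \<Sum>p\<in>{p\<in>S \<times> T. pl p = \<gamma>}. c (fst p) * d (snd p) * M (pl p) a)"
      unfolding U_def using S(1) T(1) by (rule sum.image_gen[OF finite_cartesian_product])
    also have "\<dots> = (\<Sum>\<gamma>\<in>U. e \<gamma> * M \<gamma> a)"
      unfolding e_def sum_distrib_right by (intro sum.cong refl) auto
    finally show ?thesis .
  qed
  moreover have "finite U" unfolding U_def using S(1) T(1) by simp
  ultimately show ?thesis unfolding mpoly_def M_def by blast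
qed

lemma mpoly_sum: assumes "finite I" "\<And>i. i \<in> I \<Longrightarrow> mpoly m (f i)"
  shows "mpoly m (\<lambda>a. \<Sum>i\<in>I. f i a)"
  using assms by (induction I rule: finite_induct) (auto intro: mpoly_add mpoly_const)




lemma coeff_Ppoly: "coeff (Ppoly m a) n = (if n < m then a (m - n) else 0)"
proof -
  have "coeff (Ppoly m a) n = (\<Sum>i=1..m. if m - i = n then a i else 0)"
    unfolding Ppoly_def by (simp add: coeff_sum coeff_monom)
  also have "\<dots> = (\<Sum>i=1..m. if i = m - n \<and> n < m then a i else 0)"
    by (rule sum.cong) auto
  also have "\<dots> = (if n < m then a (m - n) else 0)"
    by (cases "n < m") (auto simp: sum.delta)
  finally show ?thesis .
qed

lemma mpoly_coeff_Ppoly: "mpoly m (\<lambda>a. coeff (Ppoly m a) n)"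
  unfolding coeff_Ppoly by (cases "n < m") (auto intro: mpoly_var mpoly_const)

lemma mpoly_coeff_pow: "mpoly m (\<lambda>a. coeff (Ppoly m a ^ k) n)"
proof (induction k arbitrary: n)
  case 0
  then show ?case by (simp add: mpoly_const)
next
  case (Suc k)
  show ?case unfolding power_Suc coeff_mult
    by (intro mpoly_sum mpoly_mult mpoly_coeff_Ppoly Suc) auto
qed

lemma mpoly_bjk: "mpoly m (\<lambda>a. bjk m a j k)"
  unfolding bjk_def coeff_smult
  by (cases "m * k < j") (auto intro: mpoly_mult mpoly_const mpoly_coeff_pow)

lemma degree_Ppoly: "degree (Ppoly m a) \<le> m - 1"
  by (rule degree_le) (auto simp: coeff_Ppoly)

lemma coeff_pow_agree:
  fixes p q :: "complex poly"
  assumes "\<And>i. m \<le> i + j' \<Longrightarrow> coeff p i = coeff q i"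
    and "degree p \<le> m - 1" "degree q \<le> m - 1" "m > 0"
  shows "m * k + 1 \<le> n + j' + k \<Longrightarrow> coeff (p ^ k) n = coeff (q ^ k) n"
proof (induction k arbitrary: n)
  case 0
  then show ?case by simp
next
  case (Suc k)
  have dp: "degree (p ^ k) \<le> (m - 1) * k" "degree (q ^ k) \<le> (m - 1) * k"
    using degree_power_le[of p k] degree_power_le[of q k] assms(2,3)
    by (metis mult.commute mult_le_mono2 order_trans)+
  have "coeff p i * coeff (p ^ k) (n - i) = coeff q i * coeff (q ^ k) (n - i)" if "i \<le> n" for i
  proof (cases "m \<le> i")
    case True
    then have "coeff p i = 0" "coeff q i = 0" using assms(2,3,4) by (auto intro: coeff_eq_0)
    then show ?thesis by simp
  next
    case False
    show ?thesis
    proof (cases "m \<le> i + j'")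
      case True
      have "m * k + 1 \<le> (n - i) + j' + k" using Suc.prems False that
        by (simp add: algebra_simps)
      then show ?thesis using Suc.IH assms(1)[OF True] by simp
    next
      case False': False
      have "k \<le> k * m" using assms(4) by simp
      moreover have "(m - 1) * k = k * m - k" by (simp add: diff_mult_distrib2 mult.commute)
      moreover have "m * Suc k = m + k * m" by simp
      ultimately have "(m - 1) * k < n - i" using Suc.prems False False' that
        by arith
      then have "coeff (p ^ k) (n - i) = 0" "coeff (q ^ k) (n - i) = 0"
        using dp by (auto intro: coeff_eq_0)
      then show ?thesis by simp
    qed
  qed
  then show ?case unfolding power_Suc coeff_mult by (intro sum.cong) auto
qed

lemma bjk_agree:
  assumes "\<forall>i\<in>{1..j'}. a i = a' i" "m > 0" "k \<ge> 1" "m * k + 1 \<le> m * k - j + j' + k"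
  shows "bjk m a j k = bjk m a' j k"
proof -
  have "coeff (Ppoly m a ^ k) n = coeff (Ppoly m a' ^ k) n" if "m * k + 1 \<le> n + j' + k" for n
    by (rule coeff_pow_agree[OF _ degree_Ppoly degree_Ppoly \<open>m > 0\<close> that])
       (use assms(1) in \<open>auto simp: coeff_Ppoly intro!: bspec[OF assms(1)]\<close>)
  then show ?thesis unfolding bjk_def coeff_smult using assms(4) by auto
qed

lemma bjk_1: assumes "1 \<le> j" "j \<le> m" shows "bjk m a j 1 = a j / 2"
  using assms by (simp add: bjk_def coeff_Ppoly)




lemma integrable_by_bound:
  fixes f :: "real \<Rightarrow> real"
  assumes cont: "continuous_on {0<..} f"
    and b1: "\<And>t. 0 < t \<Longrightarrow> t \<le> 1 \<Longrightarrow> \<bar>f t\<bar> \<le> t powr a" and a: "a > -1"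
    and b2: "\<And>t. 1 \<le> t \<Longrightarrow> \<bar>f t\<bar> \<le> C * t powr b" and b: "b < -1"
  shows "f integrable_on {0<..}"
proof -
  have m1: "{0<..1::real} \<in> sets lebesgue" by simp
  have m2: "{(1::real)..} \<in> sets lebesgue" by simp
  have "f absolutely_integrable_on {0<..1}"
  proof (rule measurable_bounded_by_integrable_imp_absolutely_integrable[OF _ m1])
    show "f \<in> borel_measurable (lebesgue_on {0<..1})"
      by (rule continuous_imp_measurable_on_sets_lebesgue[OF continuous_on_subset[OF cont] m1]) auto
    show "(\<lambda>x. x powr a) integrable_on {0<..1}"
      by (rule integrable_on_powr_from_0') (use a in auto)
  qed (use b1 in auto)
  then have i1: "f integrable_on {0<..1}" unfolding absolutely_integrable_on_def by blast
  have "f absolutely_integrable_on {1..}"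
  proof (rule measurable_bounded_by_integrable_imp_absolutely_integrable[OF _ m2])
    show "f \<in> borel_measurable (lebesgue_on {1..})"
      by (rule continuous_imp_measurable_on_sets_lebesgue[OF continuous_on_subset[OF cont] m2]) auto
    show "(\<lambda>x. C * x powr b) integrable_on {1..}"
      using has_integral_powr_to_inf[OF b, of 1] by (intro integrable_on_mult_right) (auto simp: integrable_on_def)
  qed (use b2 in auto)
  then have i2: "f integrable_on {1..}" unfolding absolutely_integrable_on_def by blast
  show ?thesis
  proof (rule integrable_Un'[OF i1 i2])
    have "{0<..1} \<inter> {1..} = {1::real}" by auto
    then show "negligible ({0<..1} \<inter> {1::real..})" by simp
  qed auto
qed

lemma pos_integral:
  fixes f :: "real \<Rightarrow> real"
  assumes cont: "continuous_on {0<..} f" and int: "f integrable_on {0<..}"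
    and nn: "\<And>t. 0 < t \<Longrightarrow> 0 \<le> f t" and p: "f 1 > 0"
  shows "integral {0<..} f > 0"
proof -
  have i12: "f integrable_on {1..2}" by (rule integrable_on_subinterval[OF int]) auto
  have "integral {1..2} f \<le> integral {0<..} f"
    by (rule integral_subset_le[OF _ i12 int]) (use nn in auto)
  moreover have "integral {1..2} f > 0"
  proof -
    have "integral {1..2} f \<ge> 0" by (rule integral_nonneg[OF i12]) (use nn in auto)
    moreover have "integral {1..2} f \<noteq> 0"
    proof
      assume "integral {1..2} f = 0"
      then have "(f has_integral 0) (cbox 1 2)" using i12 by (metis has_integral_integrable_integral cbox_interval)
      from has_integral_0_cbox_imp_0[OF _ _ this, of 1] have "f 1 = 0"
        using nn continuous_on_subset[OF cont, of "{1..2}"] by (auto simp: subset_iff)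
      with p show False by simp
    qed
    ultimately show ?thesis by simp
  qed
  ultimately show ?thesis by simp
qed




definition Fk :: "nat \<Rightarrow> nat \<Rightarrow> nat \<Rightarrow> real \<Rightarrow> real" where
  "Fk m j k t = t powr (real (m * k) - real j) * (t ^ m + 1) powr (- (real k - 1/2))"

lemma Fk_cont: "continuous_on {0<..} (Fk m j k)"
proof -
  have "\<forall>x\<in>{(0::real)<..}. x ^ m + 1 \<noteq> 0"
    by (metis greaterThan_iff le_add_same_cancel2 less_imp_le not_one_le_zero zero_le_power)
  then show ?thesis unfolding Fk_def
    by (intro continuous_intros) (auto)
qed

lemma P_cont: "continuous_on {0<..} (\<lambda>t::real. t powr e)"
  by (intro continuous_intros) auto

lemma Fk_alt:
  assumes "t > 0"
  shows "Fk m j k t = t powr (real m / 2 - real j) * (t ^ m / (t ^ m + 1)) powr (real k - 1/2)"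
proof -
  have e: "real (m * k) - real j = (real m / 2 - real j) + real m * (real k - 1/2)"
    by (simp add: algebra_simps)
  have pm: "t powr (real m * (real k - 1/2)) = (t ^ m) powr (real k - 1/2)"
    using assms by (simp only: powr_powr[of t "real m" "real k - 1/2", symmetric] powr_realpow)
  have "Fk m j k t = t powr (real m / 2 - real j) * ((t ^ m) powr (real k - 1/2) / (t ^ m + 1) powr (real k - 1/2))"
    unfolding Fk_def e powr_add pm by (simp only: powr_minus divide_inverse mult.assoc)
  also have "\<dots> = t powr (real m / 2 - real j) * (t ^ m / (t ^ m + 1)) powr (real k - 1/2)"
    by (simp add: powr_divide)
  finally show ?thesis .
qed
lemma Fk_le_P:
  assumes "t > 0" "k \<ge> 1"
  shows "Fk m j k t \<le> t powr (real m / 2 - real j)"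
proof -
  have tm: "0 < t ^ m" using assms by simp
  then have u1: "\<bar>t ^ m / (t ^ m + 1)\<bar> \<le> 1" by (simp add: divide_le_eq_1)
  have "(t ^ m / (t ^ m + 1)) powr (real k - 1/2) \<le> 1"
    using assms by (intro powr_le1[OF _ u1]) auto
  then show ?thesis unfolding Fk_alt[OF assms(1)]
    by (simp add: mult_left_le)
qed


lemma Fk_le1:
  assumes "t > 0" "t \<le> 1" "real j \<le> real (m * k)" "k \<ge> 1"
  shows "Fk m j k t \<le> 1"
proof -
  have a: "t powr (real (m * k) - real j) \<le> 1" using assms by (intro powr_le1) auto
  have "1 \<le> (t ^ m + 1) powr (real k - 1/2)" using assms
    by (intro ge_one_powr_ge_zero) auto
  then have b: "(t ^ m + 1) powr (- (real k - 1/2)) \<le> 1"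
    unfolding powr_minus[of _ "real k - 1/2"] using inverse_le_1_iff by fastforce
  show ?thesis unfolding Fk_def using a b by (intro mult_le_one) auto
qed


lemma P_minus_Fk:
  assumes "t \<ge> 1" "k \<ge> 1"
  shows "t powr (real m / 2 - real j) - Fk m j k t \<le> real k * t powr (real m / 2 - real j - real m)"
proof -
  have t0: "t > 0" using assms by simp
  define u where "u = t ^ m / (t ^ m + 1)"
  have tm: "t ^ m > 0" using t0 by simp
  have u0: "0 < u" "u \<le> 1" unfolding u_def using tm by auto
  have "u ^ k = u powr real k" using u0 by (simp add: powr_realpow)
  also have "\<dots> \<le> u powr (real k - 1/2)" using u0 by (intro powr_mono') auto
  finally have uk: "u ^ k \<le> u powr (real k - 1/2)" .
  have "1 + real k * (u - 1) \<le> (1 + (u - 1)) ^ k"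
    using u0 by (intro Bernoulli_inequality) auto
  then have bern: "1 + real k * (u - 1) \<le> u ^ k" by simp
  have "1 - u = 1 / (t ^ m + 1)" unfolding u_def using tm by (simp add: field_simps)
  also have "\<dots> \<le> 1 / t ^ m" using tm by (intro divide_left_mono) auto
  finally have "1 - u \<le> 1 / t ^ m" .
  then have "1 - u powr (real k - 1/2) \<le> real k / t ^ m"
  proof -
    have "real k * (1 - u) \<le> real k * (1 / t ^ m)" using \<open>1 - u \<le> 1 / t ^ m\<close> by (rule mult_left_mono) auto
    then show ?thesis using uk bern by (simp add: algebra_simps)
  qed
  then have "t powr (real m / 2 - real j) * (1 - u powr (real k - 1/2)) \<le> t powr (real m / 2 - real j) * (real k / t ^ m)"
    by (intro mult_left_mono) auto
  also have "\<dots> = real k * t powr (real m / 2 - real j - real m)"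
  proof -
    have "t powr (real m / 2 - real j - real m) = t powr (real m / 2 - real j) / t ^ m"
      by (simp only: powr_diff powr_realpow[OF t0])
    then show ?thesis by simp
  qed
  finally show ?thesis unfolding Fk_alt[OF t0] u_def[symmetric] by (simp add: right_diff_distrib)
qed





lemma F1_lt_P:
  assumes "t > 0"
  shows "Fk m j 1 t < t powr (real m / 2 - real j)"
proof -
  have tm: "t ^ m > 0" using assms by simp
  have "(t ^ m / (t ^ m + 1)) powr (1/2) < 1 powr (1/2)"
    using tm by (intro powr_less_mono2) auto
  then have "(t ^ m / (t ^ m + 1)) powr (real 1 - 1/2) < 1" by simp
  then show ?thesis unfolding Fk_alt[OF assms] using assms by simp
qed

lemma Fk_integrable:
  assumes "real m + 3 \<le> 2 * real j" "j \<le> m * k" "k \<ge> 1"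
  shows "Fk m j k integrable_on {0<..}"
proof (rule integrable_by_bound[OF Fk_cont, where a=0 and C=1 and b="-3/2"])
  fix t :: real assume t: "0 < t" "t \<le> 1"
  have "0 \<le> Fk m j k t" unfolding Fk_def by simp
  moreover have "real j \<le> real (m * k)" using assms(2) by (metis of_nat_le_iff)
  ultimately show "\<bar>Fk m j k t\<bar> \<le> t powr 0" using Fk_le1[OF t, of j m k] assms t by simp
next
  fix t :: real assume t: "1 \<le> t"
  have "0 \<le> Fk m j k t" unfolding Fk_def by simp
  moreover have "Fk m j k t \<le> t powr (real m / 2 - real j)" using t assms by (intro Fk_le_P) auto
  moreover have "t powr (real m / 2 - real j) \<le> t powr (-3/2)" using t assms by (intro powr_mono) auto
  ultimately show "\<bar>Fk m j k t\<bar> \<le> 1 * t powr (-3/2)" by simp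
qed auto

lemma FkP_integrable:
  assumes "2 * j \<le> m + 1" "1 \<le> j" "k \<ge> 1" "m \<ge> 1"
  shows "(\<lambda>t. Fk m j k t - t powr (real m / 2 - real j)) integrable_on {0<..}"
proof (rule integrable_by_bound[where a="real m / 2 - real j" and C="real k" and b="-3/2"])
  show "continuous_on {0<..} (\<lambda>t. Fk m j k t - t powr (real m / 2 - real j))"
    by (intro continuous_on_diff Fk_cont P_cont)
  show "real m / 2 - real j > -1" using assms by simp
next
  fix t :: real assume t: "0 < t" "t \<le> 1"
  have "0 \<le> Fk m j k t" unfolding Fk_def by simp
  then show "\<bar>Fk m j k t - t powr (real m / 2 - real j)\<bar> \<le> t powr (real m / 2 - real j)"
    using Fk_le_P[of t k m j] t assms by simp
next
  fix t :: real assume t: "1 \<le> t"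
  have "Fk m j k t \<le> t powr (real m / 2 - real j)" using t assms by (intro Fk_le_P) auto
  moreover have "t powr (real m / 2 - real j) - Fk m j k t \<le> real k * t powr (real m / 2 - real j - real m)"
    using t assms by (intro P_minus_Fk) auto
  moreover have "t powr (real m / 2 - real j - real m) \<le> t powr (-3/2)" using t assms by (intro powr_mono) auto
  ultimately show "\<bar>Fk m j k t - t powr (real m / 2 - real j)\<bar> \<le> real k * t powr (-3/2)"
    by (smt (verit) mult_left_mono of_nat_0_le_iff)
qed auto

lemma Fk_integral_pos:
  assumes "real m + 3 \<le> 2 * real j" "j \<le> m"
  shows "integral {0<..} (Fk m j 1) > 0"
proof (rule pos_integral[OF Fk_cont Fk_integrable[OF assms(1)]])
  show "Fk m j 1 1 > 0" unfolding Fk_def by simp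
qed (use assms in \<open>auto simp: Fk_def\<close>)

lemma FkP_integral_neg:
  assumes "2 * j \<le> m + 1" "1 \<le> j" "m \<ge> 1"
  shows "integral {0<..} (\<lambda>t. Fk m j 1 t - t powr (real m / 2 - real j)) < 0"
proof -
  have "integral {0<..} (\<lambda>t. t powr (real m / 2 - real j) - Fk m j 1 t) > 0"
  proof (rule pos_integral)
    show "continuous_on {0<..} (\<lambda>t. t powr (real m / 2 - real j) - Fk m j 1 t)"
      by (intro continuous_on_diff Fk_cont P_cont)
    show "(\<lambda>t. t powr (real m / 2 - real j) - Fk m j 1 t) integrable_on {0<..}"
      using integrable_neg[OF FkP_integrable[OF assms(1,2) _ assms(3), of 1]] by simp
    show "0 \<le> t powr (real m / 2 - real j) - Fk m j 1 t" if "0 < t" for t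
      using F1_lt_P[OF that, of m j] by simp
    show "0 < 1 powr (real m / 2 - real j) - Fk m j 1 1"
      using F1_lt_P[of 1 m j] by simp
  qed
  moreover have "integral {0<..} (\<lambda>t. t powr (real m / 2 - real j) - Fk m j 1 t) =
      - integral {0<..} (\<lambda>t. Fk m j 1 t - t powr (real m / 2 - real j))"
    by (subst integral_neg[symmetric]) auto
  ultimately show ?thesis by simp
qed




definition Ic :: "nat \<Rightarrow> nat \<Rightarrow> nat \<Rightarrow> complex" where
  "Ic m j k = (if 2 * j \<le> m + 1
     then integral {0<..} (\<lambda>t. complex_of_real (Fk m j k t - t powr (real m / 2 - real j)))
     else integral {0<..} (\<lambda>t. complex_of_real (Fk m j k t)))"

lemma int_of_real:
  assumes "f integrable_on S"
  shows "(\<lambda>t. complex_of_real (f t)) integrable_on S"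
    "integral S (\<lambda>t. complex_of_real (f t)) = of_real (integral S f)"
  using has_integral_of_real[OF integrable_integral[OF assms]]
  by (auto simp: integrable_on_def integral_unique)

lemma Kmj_sum:
  assumes m: "m \<ge> 3" and j: "1 \<le> j" and ns: "\<not> (even m \<and> j = m div 2 + 1)"
  shows "Kmj m j a = (\<Sum>k=1..j. bjk m a j k * Ic m j k)"
proof (cases "2 * j \<le> m + 1")
  case True
  have eq: "(\<lambda>t. gj m a j t - bj m a j * complex_of_real (t powr (real m / 2 - real j))) =
     (\<lambda>t. \<Sum>k=1..j. bjk m a j k * complex_of_real (Fk m j k t - t powr (real m / 2 - real j)))"
    unfolding gj_def bj_def Fk_def
    by (simp add: sum_distrib_right sum_subtractf[symmetric] right_diff_distrib)
  have int: "(\<lambda>t. bjk m a j k * complex_of_real (Fk m j k t - t powr (real m / 2 - real j))) integrable_on {0<..}"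
    if "k \<in> {1..j}" for k
    using that True j m by (intro integrable_on_mult_right int_of_real(1) FkP_integrable) auto
  have "Kmj m j a = integral {0<..} (\<lambda>t. gj m a j t - bj m a j * complex_of_real (t powr (real m / 2 - real j)))"
    unfolding Kmj_def using j True by simp
  also have "\<dots> = integral {0<..} (\<lambda>t. \<Sum>k=1..j. bjk m a j k * complex_of_real (Fk m j k t - t powr (real m / 2 - real j)))"
    by (simp only: eq)
  also have "\<dots> = (\<Sum>k=1..j. integral {0<..} (\<lambda>t. bjk m a j k * complex_of_real (Fk m j k t - t powr (real m / 2 - real j))))"
    by (rule integral_sum[OF _ int]) simp_all
  also have "\<dots> = (\<Sum>k=1..j. bjk m a j k * Ic m j k)"
    by (intro sum.cong refl) (simp only: integral_mult_right Ic_def if_P[OF True])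
  finally show ?thesis .
next
  case False
  have big: "real m + 3 \<le> 2 * real j"
  proof -
    have "2 * j \<noteq> m + 2" using ns by presburger
    then have "m + 3 \<le> 2 * j" using False by simp
    then show ?thesis by linarith
  qed
  have eq: "(\<lambda>t. gj m a j t) = (\<lambda>t. \<Sum>k=1..j. bjk m a j k * complex_of_real (Fk m j k t))"
    unfolding gj_def Fk_def by simp
  have int: "(\<lambda>t. bjk m a j k * complex_of_real (Fk m j k t)) integrable_on {0<..}"
    if "k \<in> {1..j}" for k
  proof (cases "m * k < j")
    case True
    then have "bjk m a j k = 0" by (simp add: bjk_def)
    then show ?thesis by (simp add: integrable_0)
  next
    case False
    then show ?thesis using that big
      by (intro integrable_on_mult_right int_of_real(1) Fk_integrable) auto
  qed
  have "Kmj m j a = integral {0<..} (\<lambda>t. gj m a j t)"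
    unfolding Kmj_def using j False ns by auto
  also have "\<dots> = integral {0<..} (\<lambda>t. \<Sum>k=1..j. bjk m a j k * complex_of_real (Fk m j k t))"
    by (simp only: eq)
  also have "\<dots> = (\<Sum>k=1..j. integral {0<..} (\<lambda>t. bjk m a j k * complex_of_real (Fk m j k t)))"
    by (rule integral_sum[OF _ int]) simp_all
  also have "\<dots> = (\<Sum>k=1..j. bjk m a j k * Ic m j k)"
    by (intro sum.cong refl) (simp only: integral_mult_right Ic_def if_not_P[OF False])
  finally show ?thesis .
qed

lemma Ic1_nonzero:
  assumes m: "m \<ge> 3" and j: "1 \<le> j" "j \<le> m" and ns: "\<not> (even m \<and> j = m div 2 + 1)"
  shows "Ic m j 1 \<noteq> 0"
proof (cases "2 * j \<le> m + 1")
  case True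
  have "Ic m j 1 = of_real (integral {0<..} (\<lambda>t. Fk m j 1 t - t powr (real m / 2 - real j)))"
    unfolding Ic_def if_P[OF True] using True j m by (intro int_of_real(2) FkP_integrable) auto
  moreover have "integral {0<..} (\<lambda>t. Fk m j 1 t - t powr (real m / 2 - real j)) < 0"
    using True j m by (intro FkP_integral_neg) auto
  ultimately show ?thesis by simp
next
  case False
  have big: "real m + 3 \<le> 2 * real j"
  proof -
    have "2 * j \<noteq> m + 2" using ns by presburger
    then have "m + 3 \<le> 2 * j" using False by simp
    then show ?thesis by linarith
  qed
  have "Ic m j 1 = of_real (integral {0<..} (Fk m j 1))"
    unfolding Ic_def if_not_P[OF False] using False j big by (intro int_of_real(2) Fk_integrable) auto
  moreover have "integral {0<..} (Fk m j 1) > 0"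
    using big j by (intro Fk_integral_pos) auto
  ultimately show ?thesis by simp
qed

lemma cos_nonzero:
  assumes j: "1 \<le> j" "j \<le> m" and ns: "\<not> (even m \<and> j = m div 2 + 1)"
  shows "cos ((real j - 1) * pi / real m) \<noteq> 0"
proof -
  define x where "x = (real j - 1) * pi / real m"
  have m0: "real m > 0" using j by simp
  have x0: "0 \<le> x" unfolding x_def using j by simp
  have "(real j - 1) * pi < real m * pi" using j by (intro mult_strict_right_mono) auto
  then have x1: "x < pi" unfolding x_def using m0 by (simp add: pos_divide_less_eq mult.commute)
  have x2: "x \<noteq> pi / 2"
  proof
    assume "x = pi / 2"
    then have "(real j - 1) * pi = (real m / 2) * pi" unfolding x_def using m0 by (simp add: field_simps)
    then have "real j - 1 = real m / 2" using pi_neq_zero by (metis mult_cancel_right)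
    then have "real (2 * j) = real (m + 2)" by simp
    then have "2 * j = m + 2" using of_nat_eq_iff by blast
    then show False using ns by presburger
  qed
  show ?thesis unfolding x_def[symmetric]
  proof (cases "x < pi / 2")
    case True
    then show "cos x \<noteq> 0" using x0 cos_gt_zero_pi[of x] by simp
  next
    case False
    then have "0 < cos (pi - x)" using x1 x2 by (intro cos_gt_zero_pi) auto
    then show "cos x \<noteq> 0" by simp
  qed
qed




lemma cj_sum:
  assumes "m \<ge> 3" "1 \<le> j" and ns: "\<not> (even m \<and> j = m div 2 + 1)"
  shows "cj m j a = complex_of_real (cos ((real j - 1) * pi / real m) / pi) * (\<Sum>k=1..j. bjk m a j k * Ic m j k)"
  unfolding cj_def if_not_P[OF ns] Kmj_sum[OF assms] ..

lemma cj_special: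
  assumes "even m" "j = m div 2 + 1"
  shows "cj m j a = (\<Sum>k=1..j. bjk m a j k) * (- 1 / of_nat m)"
proof -
  have "cj m j a = - bj m a j / of_nat m" using assms unfolding cj_def nu_def by simp
  also have "\<dots> = bj m a j * (- 1 / of_nat m)" by (simp add: divide_inverse)
  finally show ?thesis unfolding bj_def .
qed

lemma cj0: "cj m 0 a = cj m 0 a'"
  unfolding cj_def Kmj_def by simp

lemma mpoly_cj:
  assumes "m \<ge> 3"
  shows "mpoly m (cj m j)"
proof (cases "j = 0")
  case True
  have "cj m j = (\<lambda>a. cj m 0 (\<lambda>_. 0))" using True by (auto intro: cj0)
  then show ?thesis by (simp add: mpoly_const)
next
  case False
  show ?thesis
  proof (cases "even m \<and> j = m div 2 + 1")
    case True
    have "cj m j = (\<lambda>a. (\<Sum>k=1..j. bjk m a j k) * (- 1 / of_nat m))"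
      using True by (auto simp: cj_special)
    then show ?thesis unfolding \<open>cj m j = _\<close> by (intro mpoly_mult mpoly_sum mpoly_bjk mpoly_const) auto
  next
    case ns: False
    have "cj m j = (\<lambda>a. complex_of_real (cos ((real j - 1) * pi / real m) / pi) * (\<Sum>k=1..j. bjk m a j k * Ic m j k))"
      using False ns assms by (auto simp: cj_sum)
    then show ?thesis unfolding \<open>cj m j = _\<close> by (intro mpoly_mult mpoly_sum mpoly_bjk mpoly_const) auto
  qed
qed

lemma sum_agree:
  assumes "m \<ge> 3" "1 \<le> j" "j \<le> m" "\<forall>i\<in>{1..j}. a i = a' i"
  shows "(\<Sum>k=1..j. bjk m a j k * X k) = (\<Sum>k=1..j. bjk m a' j k * X k)"
proof (intro sum.cong refl)
  fix k assume k: "k \<in> {1..j}"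
  have "m \<le> m * k" using k by simp
  then show "bjk m a j k * X k = bjk m a' j k * X k"
    using assms k by (subst bjk_agree[where j'=j]) auto
qed

lemma lin_sum:
  assumes "m \<ge> 3" "1 \<le> j" "j \<le> m"
  shows "(\<Sum>k=1..j. bjk m (a(j := z)) j k * X k) = z / 2 * X 1 + (\<Sum>k=Suc 1..j. bjk m a j k * X k)"
proof -
  have "(\<Sum>k=1..j. bjk m (a(j := z)) j k * X k) = bjk m (a(j := z)) j 1 * X 1 + (\<Sum>k=Suc 1..j. bjk m (a(j := z)) j k * X k)"
    by (rule sum.atLeast_Suc_atMost[OF assms(2)])
  also have "bjk m (a(j := z)) j 1 = z / 2" using assms bjk_1[of j m "a(j := z)"] by simp
  also have "(\<Sum>k=Suc 1..j. bjk m (a(j := z)) j k * X k) = (\<Sum>k=Suc 1..j. bjk m a j k * X k)"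
  proof (intro sum.cong refl)
    fix k assume k: "k \<in> {Suc 1..j}"
    have "m \<le> m * k" using k by simp
    then have "bjk m (a(j := z)) j k = bjk m a j k"
      using assms k by (intro bjk_agree[where j'="j - 1"]) auto
    then show "bjk m (a(j := z)) j k * X k = bjk m a j k * X k" by simp
  qed
  finally show ?thesis .
qed

theorem mainTheorem6:
  fixes m :: nat
  assumes "m \<ge> 3"
  shows "(\<forall>j \<le> m + 1. \<exists>S :: (nat \<Rightarrow> nat) set. \<exists>coef :: (nat \<Rightarrow> nat) \<Rightarrow> complex.
            finite S \<and> (\<forall>a. cj m j a = (\<Sum>\<alpha>\<in>S. coef \<alpha> * (\<Prod>i=1..m. a i ^ \<alpha> i))))
       \<and> (\<forall>a a'. cj m 0 a = cj m 0 a')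
       \<and> (\<forall>j\<in>{1..m}.
            (\<forall>a a'. (\<forall>i\<in>{1..j}. a i = a' i) \<longrightarrow> cj m j a = cj m j a')
          \<and> (\<forall>a. \<exists>\<alpha> \<beta> :: complex. \<alpha> \<noteq> 0 \<and> (\<forall>z. cj m j (a(j := z)) = \<alpha> * z + \<beta>)))"
proof (intro conjI allI ballI impI)
  fix j :: nat assume "j \<le> m + 1"
  show "\<exists>S :: (nat \<Rightarrow> nat) set. \<exists>coef :: (nat \<Rightarrow> nat) \<Rightarrow> complex.
            finite S \<and> (\<forall>a. cj m j a = (\<Sum>\<alpha>\<in>S. coef \<alpha> * (\<Prod>i=1..m. a i ^ \<alpha> i)))"
    using mpoly_cj[OF assms, of j] unfolding mpoly_def .
next
  fix a a' :: "nat \<Rightarrow> complex"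
  show "cj m 0 a = cj m 0 a'" by (rule cj0)
next
  fix j :: nat and a a' :: "nat \<Rightarrow> complex" assume j: "j \<in> {1..m}" and ag: "\<forall>i\<in>{1..j}. a i = a' i"
  show "cj m j a = cj m j a'"
  proof (cases "even m \<and> j = m div 2 + 1")
    case True
    then show ?thesis unfolding cj_special[OF conjunct1[OF True] conjunct2[OF True]]
      using sum_agree[OF assms _ _ ag, of "\<lambda>_. 1"] j by simp
  next
    case False
    have j1: "1 \<le> j" and jm: "j \<le> m" using j by auto
    show ?thesis unfolding cj_sum[OF assms j1 False]
      using sum_agree[OF assms j1 jm ag, of "Ic m j"] by simp
  qed
next
  fix j :: nat and a :: "nat \<Rightarrow> complex" assume j: "j \<in> {1..m}"
  show "\<exists>\<alpha> \<beta> :: complex. \<alpha> \<noteq> 0 \<and> (\<forall>z. cj m j (a(j := z)) = \<alpha> * z + \<beta>)"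
  proof (cases "even m \<and> j = m div 2 + 1")
    case True
    define R where "R = (\<Sum>k=Suc 1..j. bjk m a j k * 1)"
    have "cj m j (a(j := z)) = (- 1 / (2 * of_nat m)) * z + R * (- 1 / of_nat m)" for z
      unfolding cj_special[OF conjunct1[OF True] conjunct2[OF True]]
      using lin_sum[OF assms, of j a z "\<lambda>_. 1"] j unfolding R_def by (simp add: field_simps)
    moreover have "(- 1 / (2 * of_nat m) :: complex) \<noteq> 0" using assms by simp
    ultimately show ?thesis by blast
  next
    case False
    have j1: "1 \<le> j" using j by simp
    define C where "C = complex_of_real (cos ((real j - 1) * pi / real m) / pi)"
    define R where "R = (\<Sum>k=Suc 1..j. bjk m a j k * Ic m j k)"
    have "cj m j (a(j := z)) = (C * Ic m j 1 / 2) * z + C * R" for z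
      unfolding cj_sum[OF assms j1 False] C_def[symmetric]
      using lin_sum[OF assms, of j a z "Ic m j"] j unfolding R_def by (simp add: field_simps)
    moreover have "C * Ic m j 1 / 2 \<noteq> 0"
      using Ic1_nonzero[OF assms _ _ False] cos_nonzero[OF _ _ False] j unfolding C_def by simp
    ultimately show ?thesis by blast
  qed
qed


end
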